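(* Let $\beta,\gamma\in(0,1]$ with $\beta\le\gamma$, let $f$ be a modulus function, $m\ge0$ an integer, $\theta=(k_r)$ a lacunary sequence, and $p=(p_k)$ a sequence of positive reals with $0<h=\inf_kp_k\le p_k\le\sup_kp_k=H<\infty$. Then $w_p^\beta(\theta,f,F,\Delta^m)\subset S_\theta^\gamma(F,\Delta^m)$.
   Context: A fuzzy number is a map $X:\mathbb{R}\to[0,1]$ which is normal, fuzzy convex, upper semicontinuous, with compact closure of $\{t:X(t)>0\}$; $L(\mathbb{R})$ is the set of fuzzy numbers. Level sets $[X]^\alpha=\{t:X(t)\ge\alpha\}$ ($\alpha\in(0,1]$), $[X]^0=\overline{\{t:X(t)>0\}}$, are compact intervals $[u^\alpha,v^\alpha]$. Subtraction: $[X-Y]^\alpha=[u_1^\alpha-v_2^\alpha,v_1^\alpha-u_2^\alpha]$. Metric: $d(X,Y)=\sup_{\alpha\in[0,1]}\max\{|u_1^\alpha-u_2^\alpha|,|v_1^\alpha-v_2^\alpha|\}$. $(\Delta^0X)_k=X_k$, $(\Delta^1X)_k=X_k-X_{k+1}$, $(\Delta^mX)_k=(\Delta^1(\Delta^{m-1}X))_k$. A lacunary sequence is an increasing integer sequence $\theta=(k_r)_{r\ge0}$ with $k_0=0$, $h_r=k_r-k_{r-1}\to\infty$; $I_r=(k_{r-1},k_r]$. A modulus function is $f:[0,\infty)\to[0,\infty)$ with $f(x)=0$ iff $x=0$, $f(x+y)\le f(x)+f(y)$, $f$ increasing, and $f$ right-continuous at $0$. $w_p^\beta(\theta,f,F,\Delta^m)$: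 sequences $X$ of fuzzy numbers with some $X_0\in L(\mathbb{R})$ such that $\lim_r\frac{1}{h_r^\beta}\sum_{k\in I_r}[f(d(\Delta^mX_k,X_0))]^{p_k}=0$. $S_\theta^\gamma(F,\Delta^m)$: sequences $X$ with some $X_0\in L(\mathbb{R})$ such that for all $\varepsilon>0$, $\lim_r\frac{1}{h_r^\gamma}|\{k\in I_r:d(\Delta^mX_k,X_0)\ge\varepsilon\}|=0$. *)

theory Defs
  imports "HOL-Analysis.Analysis"
begin

type_synonym fuzzy = "real \<Rightarrow> real"

definition usc :: "(real \<Rightarrow> real) \<Rightarrow> bool" where
  "usc X \<longleftrightarrow> (\<forall>a. open {t. X t < a})"

definition fuzzy_number :: "fuzzy \<Rightarrow> bool" where
  "fuzzy_number X \<longleftrightarrow>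
     (\<forall>t. 0 \<le> X t \<and> X t \<le> 1) \<and>
     (\<exists>t. X t = 1) \<and>
     (\<forall>x y l. 0 \<le> l \<and> l \<le> 1 \<longrightarrow> X (l * x + (1 - l) * y) \<ge> min (X x) (X y)) \<and>
     usc X \<and>
     compact (closure {t. X t > 0})"

definition level :: "fuzzy \<Rightarrow> real \<Rightarrow> real set" where
  "level X \<alpha> = (if \<alpha> > 0 then {t. X t \<ge> \<alpha>} else closure {t. X t > 0})"

definition lo :: "fuzzy \<Rightarrow> real \<Rightarrow> real" where
  "lo X \<alpha> = Inf (level X \<alpha>)"

definition hi :: "fuzzy \<Rightarrow> real \<Rightarrow> real" where
  "hi X \<alpha> = Sup (level X \<alpha>)"

text \<open>Subtraction, defined as the fuzzy number whose alpha-level sets are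
  [lo X a - hi Y a, hi X a - lo Y a].\<close>
definition fsub :: "fuzzy \<Rightarrow> fuzzy \<Rightarrow> fuzzy" where
  "fsub X Y = (\<lambda>t. Sup (insert 0 {\<alpha>. 0 < \<alpha> \<and> \<alpha> \<le> 1 \<and>
                      lo X \<alpha> - hi Y \<alpha> \<le> t \<and> t \<le> hi X \<alpha> - lo Y \<alpha>}))"

definition fdist :: "fuzzy \<Rightarrow> fuzzy \<Rightarrow> real" where
  "fdist X Y = (SUP \<alpha>\<in>{0..1}. max \<bar>lo X \<alpha> - lo Y \<alpha>\<bar> \<bar>hi X \<alpha> - hi Y \<alpha>\<bar>)"

fun fdelta :: "nat \<Rightarrow> (nat \<Rightarrow> fuzzy) \<Rightarrow> nat \<Rightarrow> fuzzy" where
  "fdelta 0 X k = X k"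
| "fdelta (Suc m) X k = fsub (fdelta m X k) (fdelta m X (Suc k))"

definition lacunary :: "(nat \<Rightarrow> nat) \<Rightarrow> bool" where
  "lacunary \<theta> \<longleftrightarrow> strict_mono \<theta> \<and> \<theta> 0 = 0 \<and>
     filterlim (\<lambda>r. real (\<theta> r - \<theta> (r - 1))) at_top sequentially"

definition hr :: "(nat \<Rightarrow> nat) \<Rightarrow> nat \<Rightarrow> nat" where
  "hr \<theta> r = \<theta> r - \<theta> (r - 1)"

definition Ir :: "(nat \<Rightarrow> nat) \<Rightarrow> nat \<Rightarrow> nat set" where
  "Ir \<theta> r = {\<theta> (r - 1)<..\<theta> r}"

definition modulus :: "(real \<Rightarrow> real) \<Rightarrow> bool" where
  "modulus f \<longleftrightarrow>
     (\<forall>x\<ge>0. f x \<ge> 0) \<and>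
     (\<forall>x\<ge>0. f x = 0 \<longleftrightarrow> x = 0) \<and>
     (\<forall>x\<ge>0. \<forall>y\<ge>0. f (x + y) \<le> f x + f y) \<and>
     mono_on {0..} f \<and>
     (f \<longlongrightarrow> 0) (at_right 0)"

definition w_set :: "real \<Rightarrow> (nat \<Rightarrow> nat) \<Rightarrow> (real \<Rightarrow> real) \<Rightarrow> (nat \<Rightarrow> real) \<Rightarrow> nat
                     \<Rightarrow> (nat \<Rightarrow> fuzzy) set" where
  "w_set \<beta> \<theta> f p m = {X. (\<forall>k. fuzzy_number (X k)) \<and>
     (\<exists>X0. fuzzy_number X0 \<and>
        (\<lambda>r. (\<Sum>k\<in>Ir \<theta> r. f (fdist (fdelta m X k) X0) powr p k) / real (hr \<theta> r) powr \<beta>)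
          \<longlonglongrightarrow> 0)}"

definition S_set :: "real \<Rightarrow> (nat \<Rightarrow> nat) \<Rightarrow> nat \<Rightarrow> (nat \<Rightarrow> fuzzy) set" where
  "S_set \<gamma> \<theta> m = {X. (\<forall>k. fuzzy_number (X k)) \<and>
     (\<exists>X0. fuzzy_number X0 \<and> (\<forall>\<epsilon>>0.
        (\<lambda>r. real (card {k\<in>Ir \<theta> r. fdist (fdelta m X k) X0 \<ge> \<epsilon>}) / real (hr \<theta> r) powr \<gamma>)
          \<longlonglongrightarrow> 0))}"

end

theory Submission
  imports Defs
begin

theorem theorem3p2:
  fixes \<beta> \<gamma> :: real and f :: "real \<Rightarrow> real" and m :: nat
    and \<theta> :: "nat \<Rightarrow> nat" and p :: "nat \<Rightarrow> real"
  assumes "0 < \<beta>" "\<beta> \<le> 1" "0 < \<gamma>" "\<gamma> \<le> 1" "\<beta> \<le> \<gamma>"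
    and "modulus f"
    and "lacunary \<theta>"
    and "\<forall>k. p k > 0"
    and "0 < Inf (range p)"
    and "bdd_above (range p)"
  shows "w_set \<beta> \<theta> f p m \<subseteq> S_set \<gamma> \<theta> m"
proof
  fix X assume "X \<in> w_set \<beta> \<theta> f p m"
  then obtain X0 where fn: "\<forall>k. fuzzy_number (X k)" and X0: "fuzzy_number X0"
    and lim: "(\<lambda>r. (\<Sum>k\<in>Ir \<theta> r. f (fdist (fdelta m X k) X0) powr p k) / real (hr \<theta> r) powr \<beta>)
          \<longlonglongrightarrow> 0" unfolding w_set_def by blast
  define H where "H = Sup (range p)"
  have pH: "p k \<le> H" for k unfolding H_def using assms(10) by (simp add: cSup_upper)
  have Hpos: "0 \<le> H" using pH[of 0] assms(8) by (meson less_le_trans less_imp_le)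
  have mod: "(\<forall>x\<ge>0. f x \<ge> 0)" "(\<forall>x\<ge>0. f x = 0 \<longleftrightarrow> x = 0)" "mono_on {0..} f"
    using assms(6) unfolding modulus_def by auto
  have sm: "strict_mono \<theta>" using assms(7) unfolding lacunary_def by auto
  have "\<forall>\<epsilon>>0. (\<lambda>r. real (card {k\<in>Ir \<theta> r. fdist (fdelta m X k) X0 \<ge> \<epsilon>}) / real (hr \<theta> r) powr \<gamma>)
          \<longlonglongrightarrow> 0"
  proof (intro allI impI)
    fix \<epsilon> :: real assume ep: "\<epsilon> > 0"
    define b where "b = f \<epsilon>"
    have bpos: "b > 0" using mod ep unfolding b_def by (metis less_eq_real_def)
    define c where "c = min b 1 powr H"
    have cpos: "c > 0" unfolding c_def using bpos by simp
    define d where "d = (\<lambda>k. fdist (fdelta m X k) X0)"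
    define S where "S = (\<lambda>r. (\<Sum>k\<in>Ir \<theta> r. f (d k) powr p k))"
    have lowk: "c \<le> f (d k) powr p k" if "d k \<ge> \<epsilon>" for k
    proof -
      have "f \<epsilon> \<le> f (d k)" using mod(3) that ep by (auto intro: mono_onD)
      hence "min b 1 \<le> f (d k)" unfolding b_def by simp
      hence "min b 1 powr p k \<le> f (d k) powr p k"
        using bpos assms(8) by (intro powr_mono2) (auto simp: less_imp_le)
      moreover have "min b 1 powr H \<le> min b 1 powr p k"
        using bpos pH[of k] by (intro powr_mono') auto
      ultimately show ?thesis unfolding c_def by linarith
    qed
    have key: "real (card {k\<in>Ir \<theta> r. d k \<ge> \<epsilon>}) * c \<le> S r" for r
    proof -
      have fin: "finite (Ir \<theta> r)" unfolding Ir_def by simp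
      have "real (card {k\<in>Ir \<theta> r. d k \<ge> \<epsilon>}) * c = (\<Sum>k\<in>{k\<in>Ir \<theta> r. d k \<ge> \<epsilon>}. c)" by simp
      also have "\<dots> \<le> (\<Sum>k\<in>{k\<in>Ir \<theta> r. d k \<ge> \<epsilon>}. f (d k) powr p k)"
        by (rule sum_mono) (auto intro: lowk)
      also have "\<dots> \<le> S r" unfolding S_def
        by (rule sum_mono2) (use fin in auto)
      finally show ?thesis .
    qed
    have lim2: "(\<lambda>r. S r / real (hr \<theta> r) powr \<beta> / c) \<longlonglongrightarrow> 0"
      using tendsto_divide[OF lim tendsto_const[of c]] cpos unfolding S_def d_def by simp
    define g where "g = (\<lambda>r. real (card {k\<in>Ir \<theta> r. d k \<ge> \<epsilon>}) / real (hr \<theta> r) powr \<gamma>)"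
    have ev1: "\<forall>\<^sub>F r in sequentially. 0 \<le> g r" unfolding g_def by simp
    have ev2: "\<forall>\<^sub>F r in sequentially. g r \<le> S r / real (hr \<theta> r) powr \<beta> / c"
    proof (rule eventually_sequentiallyI[of 1])
      fix r :: nat assume r: "1 \<le> r"
      define N where "N = real (card {k\<in>Ir \<theta> r. d k \<ge> \<epsilon>})"
      define A where "A = real (hr \<theta> r) powr \<beta>"
      define B where "B = real (hr \<theta> r) powr \<gamma>"
      have "\<theta> (r - 1) < \<theta> r" using sm r by (simp add: strict_mono_less)
      hence h1: "1 \<le> real (hr \<theta> r)" unfolding hr_def by simp
      have AB: "A \<le> B" unfolding A_def B_def
        using h1 assms(5) by (rule_tac powr_mono) auto
      have Apos: "0 < A" unfolding A_def using h1 by simp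
      have N0: "0 \<le> N" unfolding N_def by simp
      have NS: "N * c \<le> S r" unfolding N_def using key[of r] .
      have "N / B \<le> N / A" using AB Apos N0 by (simp add: divide_left_mono)
      also have "N / A \<le> S r / A / c" using NS cpos Apos
        by (simp add: field_simps)
      finally show "g r \<le> S r / real (hr \<theta> r) powr \<beta> / c"
        unfolding g_def N_def A_def B_def by simp
    qed
    have "g \<longlonglongrightarrow> 0" by (rule tendsto_sandwich[OF ev1 ev2 tendsto_const lim2])
    thus "(\<lambda>r. real (card {k\<in>Ir \<theta> r. fdist (fdelta m X k) X0 \<ge> \<epsilon>}) / real (hr \<theta> r) powr \<gamma>)
          \<longlonglongrightarrow> 0" using \<open>g \<longlonglongrightarrow> 0\<close> unfolding g_def d_def by simp
  qed
  thus "X \<in> S_set \<gamma> \<theta> m" unfolding S_set_def using fn X0 by blast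
qed

end
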